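(* The regular $\mathcal J$-length of the stack monoid $\mathbb M$ satisfies $\mathrm{len}_{\mathcal J}(\mathbb M)\le \frac{|N|^2+|N|+2}{2}+2$.
   Context: Let $\mathcal{G}=(N,T,I,P,S)$ be an indexed grammar (finite non-terminals $N$, terminals $T$, stack symbols $I$, productions of the forms $A\to w$ with $w\in T^*$, $A\to BC$, $A\to Bf$, $Af\to B$). Fix, for every $X\subseteq N$, an arbitrary binary relation $\mathcal R_X$ on $N$ (in the paper, a reachability relation in an auxiliary grammar; the bound does not depend on it). The stack monoid $\mathbb M$ has elements: all tuples $(B,Y,M,A,X)$ with $A,B\in N$, $X,Y\subseteq N$, $M\in\mathbb B^{N\times N}$ (Boolean matrices with product over $(\vee,\wedge)$), plus a neutral element $\mathbf 1$ and an absorbing element $\mathbf 0$; product $(B_2,Y_2,M_2,A_2,X_2)\cdot(B_1,Y_1,M_1,A_1,X_1)=(B_2,Y_2,M_1M_2,A_1,X_1)$ if $X_2=Y_1$ and $B_1\,\mathcal R_{X_2}\,A_2$, and $\mathbf 0$ otherwise. In a finite monoid $\mathbf M$, $x\le_{\mathcal J}y$ iff $x=ayb$ for some $a,b\in\mathbf M$; $x<_{\mathcal J}y$ iff $x\le_{\mathcal J}y$ and not $y\le_{\mathcal J}x$. An element $e$ is idempotent if $ee=e$. The regular $\mathcal J$-length $\mathrm{len}_{\mathcal J}(\mathbf M)$ is the largest $k$ such that there exist idempotents $e_1>_{\mathcal J}e_2>_{\mathcal J}\cdots>_{\mathcal J}e_k$ in $\mathbf M$. *)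

theory Defs
  imports Complex_Main
begin

text \<open>Nonterminals are modelled by a finite type 'n (the set N is UNIV, |N| = CARD('n)).
  The family of relations R_X is a parameter R :: 'n set \<Rightarrow> 'n \<Rightarrow> 'n \<Rightarrow> bool,
  where R X B A means B R_X A.\<close>

datatype 'n stack_elem =
    SOne
  | SZero
  | SElt 'n "'n set" "'n \<Rightarrow> 'n \<Rightarrow> bool" 'n "'n set"

definition bmat_mult :: "('n \<Rightarrow> 'n \<Rightarrow> bool) \<Rightarrow> ('n \<Rightarrow> 'n \<Rightarrow> bool) \<Rightarrow> 'n \<Rightarrow> 'n \<Rightarrow> bool" where
  "bmat_mult M1 M2 = (\<lambda>i j. \<exists>k. M1 i k \<and> M2 k j)"

fun stack_mult :: "('n set \<Rightarrow> 'n \<Rightarrow> 'n \<Rightarrow> bool) \<Rightarrow> 'n stack_elem \<Rightarrow> 'n stack_elem \<Rightarrow> 'n stack_elem" where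
  "stack_mult R SOne y = y"
| "stack_mult R x SOne = x"
| "stack_mult R SZero y = SZero"
| "stack_mult R x SZero = SZero"
| "stack_mult R (SElt B2 Y2 M2 A2 X2) (SElt B1 Y1 M1 A1 X1) =
     (if X2 = Y1 \<and> R X2 B1 A2 then SElt B2 Y2 (bmat_mult M1 M2) A1 X1 else SZero)"

definition J_le :: "('m \<Rightarrow> 'm \<Rightarrow> 'm) \<Rightarrow> 'm \<Rightarrow> 'm \<Rightarrow> bool" where
  "J_le mult x y = (\<exists>a b. x = mult (mult a y) b)"

definition J_less :: "('m \<Rightarrow> 'm \<Rightarrow> 'm) \<Rightarrow> 'm \<Rightarrow> 'm \<Rightarrow> bool" where
  "J_less mult x y = (J_le mult x y \<and> \<not> J_le mult y x)"

definition idem :: "('m \<Rightarrow> 'm \<Rightarrow> 'm) \<Rightarrow> 'm \<Rightarrow> bool" where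
  "idem mult e = (mult e e = e)"

text \<open>Regular J-length: the largest k such that there are idempotents
  e_0 >_J e_1 >_J ... >_J e_(k-1). (For a finite monoid this set is finite, so Sup = Max.)\<close>

definition regular_J_length :: "('m \<Rightarrow> 'm \<Rightarrow> 'm) \<Rightarrow> nat" where
  "regular_J_length mult = Sup {k. \<exists>e :: nat \<Rightarrow> 'm.
      (\<forall>i<k. idem mult (e i)) \<and> (\<forall>i. Suc i < k \<longrightarrow> J_less mult (e (Suc i)) (e i))}"

end

theory Submission
  imports Defs
begin


lemma mm_apply: "bmat_mult M1 M2 i j = (\<exists>k. M1 i k \<and> M2 k j)"
  by (simp add: bmat_mult_def)

lemma mm_assoc: "bmat_mult (bmat_mult A B) C = bmat_mult A (bmat_mult B C)"
  by (auto simp: bmat_mult_def fun_eq_iff)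

lemma mm_id_right: "bmat_mult M (\<lambda>i j. i = j) = M"
  by (auto simp: bmat_mult_def fun_eq_iff)

lemma mm_id_left: "bmat_mult (\<lambda>i j. i = j) M = M"
  by (auto simp: bmat_mult_def fun_eq_iff)

lemma idem_trans: assumes "bmat_mult B B = B" "B u w" "B w v" shows "B u v"
proof -
  have "bmat_mult B B u v" using assms(2,3) by (auto simp: mm_apply)
  thus ?thesis using assms(1) by simp
qed

lemma idem_interp: assumes "bmat_mult B B = B" "B u v" shows "\<exists>w. B u w \<and> B w v"
proof -
  have "bmat_mult B B u v" using assms by simp
  thus ?thesis by (simp add: mm_apply)
qed

lemma idem_mid:
  fixes B :: "'n::finite \<Rightarrow> 'n \<Rightarrow> bool"
  assumes "bmat_mult B B = B" "B u v" shows "\<exists>d. B d d \<and> B u d \<and> B d v"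
proof (rule ccontr)
  assume H: "\<not> ?thesis"
  let ?W = "{w. B u w \<and> B w v}"
  obtain w0 where "w0 \<in> ?W" using idem_interp[OF assms] by auto
  then obtain w where w: "w \<in> ?W" and min: "\<forall>y. y \<in> ?W \<longrightarrow> card {x. B x w} \<le> card {x. B x y}"
    using ex_has_least_nat[of "\<lambda>w. w \<in> ?W" w0 "\<lambda>w. card {x. B x w}"] by blast
  from w have "B u w" by simp
  then obtain w' where w': "B u w'" "B w' w" using idem_interp[OF assms(1)] by blast
  have "B w' v" using idem_trans[OF assms(1) w'(2)] w by simp
  hence inW: "w' \<in> ?W" using w' by simp
  have sub: "{x. B x w'} \<subset> {x. B x w}"
  proof
    show "{x. B x w'} \<subseteq> {x. B x w}" using idem_trans[OF assms(1)] w'(2) by blast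
    have "\<not> B w' w'" using H \<open>B u w'\<close> \<open>B w' v\<close> by blast
    thus "{x. B x w'} \<noteq> {x. B x w}" using w'(2) by blast
  qed
  have "card {x. B x w'} < card {x. B x w}" by (rule psubset_card_mono[OF _ sub]) simp
  thus False using min inW by force
qed

definition cl :: "('n \<Rightarrow> 'n \<Rightarrow> bool) \<Rightarrow> 'n \<Rightarrow> 'n set" where
  "cl E i = {j. E i j \<and> E j i}"

definition TT :: "('n \<Rightarrow> 'n \<Rightarrow> bool) \<Rightarrow> 'n set set set" where
  "TT E = {{cl E i, cl E j} | i j. E i i \<and> E j j \<and> (E i j = E j i)}"

lemma cl_eq:
  assumes "bmat_mult E E = E" "E i i" "E j j"
  shows "cl E i = cl E j \<longleftrightarrow> E i j \<and> E j i"
proof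
  assume "cl E i = cl E j"
  moreover have "j \<in> cl E j" using assms by (simp add: cl_def)
  ultimately have "j \<in> cl E i" by simp
  thus "E i j \<and> E j i" by (simp add: cl_def)
next
  assume "E i j \<and> E j i"
  thus "cl E i = cl E j" using idem_trans[OF assms(1)] by (auto simp: cl_def)
qed

lemma pairs_finite: "finite C \<Longrightarrow> finite {{a,b} | a b. a \<in> C \<and> b \<in> C}"
proof -
  assume "finite C"
  have "{{a,b} | a b. a \<in> C \<and> b \<in> C} \<subseteq> (\<lambda>p. {fst p, snd p}) ` (C \<times> C)"
  proof
    fix s assume "s \<in> {{a,b} | a b. a \<in> C \<and> b \<in> C}"
    then obtain a b where "s = {a,b}" "a \<in> C" "b \<in> C" by blast
    thus "s \<in> (\<lambda>p. {fst p, snd p}) ` (C \<times> C)" by (intro image_eqI[of _ _ "(a,b)"]) auto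
  qed
  thus ?thesis by (rule finite_subset) (use \<open>finite C\<close> in simp)
qed

lemma pairs_card: "finite C \<Longrightarrow> 2 * card {{a,b} | a b. a \<in> C \<and> b \<in> C} \<le> card C * (card C + 1)"
proof (induction C rule: finite_induct)
  case empty
  then show ?case by simp
next
  case (insert x C)
  let ?P = "{{a,b} | a b. a \<in> C \<and> b \<in> C}"
  have sub: "{{a,b} | a b. a \<in> insert x C \<and> b \<in> insert x C} \<subseteq> ?P \<union> (\<lambda>b. {x,b}) ` insert x C"
  proof
    fix s assume "s \<in> {{a,b} | a b. a \<in> insert x C \<and> b \<in> insert x C}"
    then obtain a b where s: "s = {a,b}" "a \<in> insert x C" "b \<in> insert x C" by blast
    show "s \<in> ?P \<union> (\<lambda>b. {x,b}) ` insert x C"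
    proof (cases "a = x")
      case True thus ?thesis using s by blast
    next
      case False
      show ?thesis
      proof (cases "b = x")
        case True
        hence "s = {x, a}" using s by (simp add: insert_commute)
        thus ?thesis using s by blast
      next
        case False
        thus ?thesis using s \<open>a \<noteq> x\<close> by blast
      qed
    qed
  qed
  have "card {{a,b} | a b. a \<in> insert x C \<and> b \<in> insert x C} \<le> card (?P \<union> (\<lambda>b. {x,b}) ` insert x C)"
    by (rule card_mono[OF _ sub]) (use pairs_finite[OF insert(1)] insert(1) in auto)
  also have "\<dots> \<le> card ?P + card ((\<lambda>b. {x,b}) ` insert x C)" by (rule card_Un_le)
  also have "\<dots> \<le> card ?P + card (insert x C)" 
    using card_image_le[of "insert x C" "\<lambda>b. {x,b}"] insert(1) by simp
  finally have "card {{a,b} | a b. a \<in> insert x C \<and> b \<in> insert x C} \<le> card ?P + card (insert x C)" .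
  moreover have "card (insert x C) = card C + 1" using insert by simp
  ultimately show ?case using insert.IH by (simp add: algebra_simps)
qed

lemma TT_bound:
  fixes E :: "'n::finite \<Rightarrow> 'n \<Rightarrow> bool"
  shows "2 * card (TT E) \<le> card (UNIV :: 'n set) * (card (UNIV :: 'n set) + 1)"
proof -
  let ?C = "range (cl E)"
  have "TT E \<subseteq> {{a,b} | a b. a \<in> ?C \<and> b \<in> ?C}" by (auto simp: TT_def)
  hence "card (TT E) \<le> card {{a,b} | a b. a \<in> ?C \<and> b \<in> ?C}"
    by (rule card_mono[rotated]) (rule pairs_finite, simp)
  moreover have "2 * card {{a,b} | a b. a \<in> ?C \<and> b \<in> ?C} \<le> card ?C * (card ?C + 1)"
    by (rule pairs_card) simp
  moreover have "card ?C \<le> card (UNIV :: 'n set)" by (rule card_image_le) simp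
  hence "card ?C * (card ?C + 1) \<le> card (UNIV :: 'n set) * (card (UNIV :: 'n set) + 1)" by (intro mult_le_mono) auto
  ultimately show ?thesis by linarith
qed



lemma main_mono:
  fixes A B X Y :: "'n::finite \<Rightarrow> 'n \<Rightarrow> bool"
  assumes iA: "bmat_mult A A = A" and iB: "bmat_mult B B = B"
    and AXBY: "A = bmat_mult (bmat_mult X B) Y"
  shows "card (TT A) \<le> card (TT B) \<and>
    (card (TT A) = card (TT B) \<longrightarrow> (\<exists>P Q. B = bmat_mult (bmat_mult P A) Q))"
proof -
  have tA: "\<And>a b c. A a b \<Longrightarrow> A b c \<Longrightarrow> A a c" using idem_trans[OF iA] by blast
  have tB: "\<And>a b c. B a b \<Longrightarrow> B b c \<Longrightarrow> B a c" using idem_trans[OF iB] by blast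
  have AXY: "A x x' = (\<exists>y y'. X x y \<and> B y y' \<and> Y y' x')" for x x'
  proof -
    have "A x x' = bmat_mult (bmat_mult X B) Y x x'" using AXBY by simp
    thus ?thesis by (auto simp: mm_apply)
  qed
  define S where "S i d = (\<exists>x y. A i x \<and> X x y \<and> B y d)" for i d
  define R' where "R' d i = (\<exists>y x. B d y \<and> Y y x \<and> A x i)" for d i
  define good where "good i d = (B d d \<and> S i d \<and> R' d i)" for i d
  define \<sigma> where "\<sigma> i = (SOME d. good i d)" for i
  have keyb: "A i i'" if kb: "S i d" "B d d'" "R' d' i'" for i d d' i'
  proof -
    obtain x y where 1: "A i x" "X x y" "B y d" using kb(1) by (auto simp: S_def)
    obtain y' x' where 2: "B d' y'" "Y y' x'" "A x' i'" using kb(3) by (auto simp: R'_def)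
    have "B y y'" using tB[OF tB[OF 1(3) kb(2)] 2(1)] .
    hence "A x x'" using AXY 1(2) 2(2) by blast
    thus ?thesis using tA 1(1) 2(3) by blast
  qed
  have gex: "\<exists>d. good i d" if gi: "A i i" for i
  proof -
    obtain x where x: "A i x" "A x i" using idem_interp[OF iA gi] by blast
    obtain x' where x': "A x x'" "A x' i" using idem_interp[OF iA x(2)] by blast
    obtain y y' where yy: "X x y" "B y y'" "Y y' x'" using x'(1) AXY by blast
    obtain d where d: "B d d" "B y d" "B d y'" using idem_mid[OF iB yy(2)] by blast
    have "S i d" unfolding S_def using x(1) yy(1) d(2) by blast
    moreover have "R' d i" unfolding R'_def using d(3) yy(3) x'(2) by blast
    ultimately show ?thesis using d(1) by (auto simp: good_def)
  qed
  have g\<sigma>: "good i (\<sigma> i)" if "A i i" for i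
    unfolding \<sigma>_def using gex[OF that] by (rule someI_ex)
  have ginv: "\<sigma> i = \<sigma> i'" if "A i i'" "A i' i" for i i'
  proof -
    have "good i = good i'"
    proof (intro ext)
      fix d
      have "S i d = S i' d" unfolding S_def using tA that by blast
      moreover have "R' d i = R' d i'" unfolding R'_def using tA that by blast
      ultimately show "good i d = good i' d" by (simp add: good_def)
    qed
    thus ?thesis by (simp add: \<sigma>_def)
  qed
  have \<sigma>D: "B (\<sigma> i) (\<sigma> i)" if "A i i" for i using g\<sigma>[OF that] by (simp add: good_def)
  have key: "A i i'" if "A i i" "A i' i'" "B (\<sigma> i) (\<sigma> i')" for i i'
    using keyb[of i "\<sigma> i" "\<sigma> i'" i'] g\<sigma>[OF that(1)] g\<sigma>[OF that(2)] that(3)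
    by (simp add: good_def)
  define g where "g c = cl B (\<sigma> (SOME i. i \<in> c))" for c
  have gcl: "g (cl A i) = cl B (\<sigma> i)" if "A i i" for i
  proof -
    have "i \<in> cl A i" using that by (simp add: cl_def)
    hence "(SOME j. j \<in> cl A i) \<in> cl A i" by (rule someI)
    hence "\<sigma> (SOME j. j \<in> cl A i) = \<sigma> i" using ginv by (simp add: cl_def)
    thus ?thesis by (simp add: g_def)
  qed
  let ?DA = "cl A ` {i. A i i}"
  have ginj: "inj_on g ?DA"
  proof (rule inj_onI)
    fix c c' assume "c \<in> ?DA" "c' \<in> ?DA" and eq: "g c = g c'"
    then obtain i i' where ii: "A i i" "A i' i'" "c = cl A i" "c' = cl A i'" by blast
    have "cl B (\<sigma> i) = cl B (\<sigma> i')" using eq ii gcl by simp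
    hence "B (\<sigma> i) (\<sigma> i') \<and> B (\<sigma> i') (\<sigma> i)" using cl_eq[OF iB] \<sigma>D ii by blast
    hence "A i i' \<and> A i' i" using key ii by blast
    thus "c = c'" using cl_eq[OF iA] ii by blast
  qed
  have TAsub: "TT A \<subseteq> Pow ?DA" by (auto simp: TT_def)
  have mapT: "(image g) ` TT A \<subseteq> TT B"
  proof
    fix V assume "V \<in> (image g) ` TT A"
    then obtain i j where ij: "V = g ` {cl A i, cl A j}" "A i i" "A j j" "A i j = A j i"
      by (auto simp: TT_def)
    have V: "V = {cl B (\<sigma> i), cl B (\<sigma> j)}" using ij gcl by simp
    have "B (\<sigma> i) (\<sigma> j) = B (\<sigma> j) (\<sigma> i)"
    proof (cases "A i j")
      case True
      hence "\<sigma> i = \<sigma> j" using ginv ij by blast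
      thus ?thesis by simp
    next
      case False
      thus ?thesis using key ij by blast
    qed
    thus "V \<in> TT B" unfolding V TT_def using \<sigma>D ij by blast
  qed
  have injT: "inj_on (image g) (TT A)"
  proof (rule inj_onI)
    fix U U' assume a: "U \<in> TT A" "U' \<in> TT A" "g ` U = g ` U'"
    have "U \<subseteq> ?DA" "U' \<subseteq> ?DA" using a(1,2) TAsub by auto
    from inj_on_image_eq_iff[OF ginj this] a(3) show "U = U'" by simp
  qed
  have finB: "finite (TT B)" by (rule finite_subset[OF subset_UNIV]) simp
  have le: "card (TT A) \<le> card (TT B)" by (rule card_inj_on_le[OF injT mapT finB])
  moreover have "\<exists>P Q. B = bmat_mult (bmat_mult P A) Q" if eq: "card (TT A) = card (TT B)"
  proof -
    have img: "(image g) ` TT A = TT B"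
      by (rule card_subset_eq[OF finB mapT]) (simp add: card_image[OF injT] eq)
    have surj: "\<exists>i. A i i \<and> B d (\<sigma> i) \<and> B (\<sigma> i) d" if "B d d" for d
    proof -
      have "{cl B d, cl B d} \<in> TT B" unfolding TT_def using that by blast
      hence "{cl B d, cl B d} \<in> (image g) ` TT A" by (simp only: img)
      then obtain U where U: "U \<in> TT A" "g ` U = {cl B d, cl B d}" by (rule imageE) simp
      from U(1) obtain i j where ij: "U = {cl A i, cl A j}" "A i i" "A j j" unfolding TT_def by blast
      have "g ` U = {cl B (\<sigma> i), cl B (\<sigma> j)}" using ij by (simp add: gcl)
      hence "cl B (\<sigma> i) = cl B d" using U(2) by (simp add: doubleton_eq_iff)
      thus ?thesis using cl_eq[OF iB] \<sigma>D ij that by blast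
    qed
    have pres: "B (\<sigma> i) (\<sigma> i')" if "A i i" "A i' i'" "A i i'" for i i'
    proof (rule ccontr)
      assume nb: "\<not> B (\<sigma> i) (\<sigma> i')"
      have nA: "\<not> A i' i"
      proof
        assume "A i' i"
        hence "\<sigma> i = \<sigma> i'" using ginv that by blast
        thus False using nb \<sigma>D that by simp
      qed
      have nb': "\<not> B (\<sigma> i') (\<sigma> i)" using key that nA by blast
      have "{cl B (\<sigma> i), cl B (\<sigma> i')} \<in> TT B" unfolding TT_def using \<sigma>D that nb nb' by blast
      hence "{cl B (\<sigma> i), cl B (\<sigma> i')} \<in> (image g) ` TT A" by (simp only: img)
      then obtain U where U: "U \<in> TT A" "g ` U = {cl B (\<sigma> i), cl B (\<sigma> i')}" by (rule imageE) simp
      from U(1) obtain j j' where jj: "U = {cl A j, cl A j'}" "A j j" "A j' j'" "A j j' = A j' j"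
        unfolding TT_def by blast
      have "g ` {cl A i, cl A i'} = {cl B (\<sigma> i), cl B (\<sigma> i')}" using that by (simp add: gcl)
      hence geq: "g ` {cl A i, cl A i'} = g ` U" using U(2) by simp
      have s1: "{cl A i, cl A i'} \<subseteq> ?DA" using that by auto
      have s2: "U \<subseteq> ?DA" using U(1) TAsub by auto
      have "{cl A i, cl A i'} = U" using inj_on_image_eq_iff[OF ginj s1 s2] geq by simp
      hence "(cl A i = cl A j \<and> cl A i' = cl A j') \<or> (cl A i = cl A j' \<and> cl A i' = cl A j)"
        using jj(1) doubleton_eq_iff by metis
      hence "A i i' = A i' i" using cl_eq[OF iA] that jj tA by metis
      thus False using nA that by simp
    qed
    define P where "P u i = (A i i \<and> B u (\<sigma> i))" for u i
    define Q where "Q i v = (A i i \<and> B (\<sigma> i) v)" for i v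
    have "B = bmat_mult (bmat_mult P A) Q"
    proof (intro ext iffI)
      fix u v assume "B u v"
      then obtain d where d: "B d d" "B u d" "B d v" using idem_mid[OF iB] by blast
      then obtain i where i: "A i i" "B d (\<sigma> i)" "B (\<sigma> i) d" using surj by blast
      have "P u i" unfolding P_def using i d tB by blast
      moreover have "Q i v" unfolding Q_def using i d tB by blast
      ultimately show "bmat_mult (bmat_mult P A) Q u v" using i by (auto simp: mm_apply)
    next
      fix u v assume "bmat_mult (bmat_mult P A) Q u v"
      then obtain i i' where "P u i" "A i i'" "Q i' v" by (auto simp: mm_apply)
      hence "A i i" "A i' i'" "B u (\<sigma> i)" "B (\<sigma> i') v" "A i i'" by (auto simp: P_def Q_def)
      thus "B u v" using pres tB by blast
    qed
    thus ?thesis by blast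
  qed
  ultimately show ?thesis by blast
qed



lemma mult_one_right[simp]: "stack_mult R x SOne = x" by (cases x) auto
lemma mult_zero_left[simp]: "stack_mult R SZero y = SZero" by (cases y) auto
lemma mult_zero_right[simp]: "stack_mult R x SZero = SZero" by (cases x) auto

lemma Jle_one: "J_le (stack_mult R) x SOne"
  unfolding J_le_def by (rule exI[of _ SOne], rule exI[of _ x]) simp

lemma Jle_zero: "J_le (stack_mult R) x SZero \<Longrightarrow> x = SZero"
  by (auto simp: J_le_def)

lemma Jle_refl: "J_le (stack_mult R) x x"
  unfolding J_le_def by (rule exI[of _ SOne], rule exI[of _ SOne]) simp

lemma idem_SElt: "idem (stack_mult R) (SElt B Y M A X) \<Longrightarrow> X = Y \<and> R X B A \<and> bmat_mult M M = M"
  by (auto simp: idem_def split: if_splits)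

lemma mult_right_mat:
  "stack_mult R a (SElt B Y M A X) = SElt B' Y' M' A' X' \<Longrightarrow> \<exists>Q. M' = bmat_mult M Q"
proof (cases a)
  case SOne
  assume "stack_mult R a (SElt B Y M A X) = SElt B' Y' M' A' X'"
  thus ?thesis using SOne mm_id_right by (metis stack_elem.inject stack_mult.simps(1))
next
  case SZero
  assume "stack_mult R a (SElt B Y M A X) = SElt B' Y' M' A' X'"
  thus ?thesis using SZero by simp
next
  case (SElt B2 Y2 M2 A2 X2)
  assume "stack_mult R a (SElt B Y M A X) = SElt B' Y' M' A' X'"
  thus ?thesis using SElt by (auto split: if_splits)
qed

lemma mult_left_mat:
  "stack_mult R (SElt B Y M A X) b = SElt B' Y' M' A' X' \<Longrightarrow> \<exists>P. M' = bmat_mult P M"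
proof (cases b)
  case SOne
  assume "stack_mult R (SElt B Y M A X) b = SElt B' Y' M' A' X'"
  thus ?thesis using SOne mm_id_left by (metis stack_elem.inject mult_one_right)
next
  case SZero
  assume "stack_mult R (SElt B Y M A X) b = SElt B' Y' M' A' X'"
  thus ?thesis using SZero by simp
next
  case (SElt B2 Y2 M2 A2 X2)
  assume "stack_mult R (SElt B Y M A X) b = SElt B' Y' M' A' X'"
  thus ?thesis using SElt by (auto split: if_splits)
qed

lemma Jle_mat:
  assumes "J_le (stack_mult R) (SElt B Y M A X) (SElt B2 Y2 M2 A2 X2)"
  shows "\<exists>P Q. M = bmat_mult (bmat_mult P M2) Q"
proof -
  obtain a b where ab: "SElt B Y M A X = stack_mult R (stack_mult R a (SElt B2 Y2 M2 A2 X2)) b"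
    using assms by (auto simp: J_le_def)
  show ?thesis
  proof (cases "stack_mult R a (SElt B2 Y2 M2 A2 X2)")
    case SOne
    thus ?thesis by (cases a) (auto split: if_splits)
  next
    case SZero
    thus ?thesis using ab by simp
  next
    case (SElt B' Y' M' A' X')
    obtain Q where Q: "M' = bmat_mult M2 Q" using mult_right_mat[OF SElt] by blast
    have h: "stack_mult R (SElt B' Y' M' A' X') b = SElt B Y M A X" using ab SElt by simp
    obtain P where P: "M = bmat_mult P M'" using mult_left_mat[OF h] by blast
    show ?thesis using P Q mm_assoc by metis
  qed
qed

lemma mat_Jle:
  assumes "idem (stack_mult R) (SElt Bx Yx Mx Ax Xx)" "idem (stack_mult R) (SElt By Yy My Ay Xy)"
    and "My = bmat_mult (bmat_mult P Mx) Q"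
  shows "J_le (stack_mult R) (SElt By Yy My Ay Xy) (SElt Bx Yx Mx Ax Xx)"
proof -
  from idem_SElt[OF assms(1)] have x: "Xx = Yx" "R Xx Bx Ax" by auto
  from idem_SElt[OF assms(2)] have y: "Xy = Yy" by auto
  have "stack_mult R (stack_mult R (SElt By Yy Q Ax Xx) (SElt Bx Yx Mx Ax Xx)) (SElt Bx Xx P Ay Xy)
        = SElt By Yy (bmat_mult P (bmat_mult Mx Q)) Ay Xy"
    using x by simp
  also have "\<dots> = SElt By Yy My Ay Xy" using assms(3) by (simp add: mm_assoc)
  finally show ?thesis unfolding J_le_def by metis
qed

fun mat :: "'n stack_elem \<Rightarrow> 'n \<Rightarrow> 'n \<Rightarrow> bool" where
  "mat (SElt B Y M A X) = M"
| "mat _ = (\<lambda>_ _. False)"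

lemma chain_bound:
  fixes R :: "('n::finite) set \<Rightarrow> 'n \<Rightarrow> 'n \<Rightarrow> bool" and e :: "nat \<Rightarrow> 'n stack_elem"
  assumes idm: "\<forall>i<k. idem (stack_mult R) (e i)"
    and chn: "\<forall>i. Suc i < k \<longrightarrow> J_less (stack_mult R) (e (Suc i)) (e i)"
  shows "2 * k \<le> card (UNIV :: 'n set) * (card (UNIV :: 'n set) + 1) + 6"
proof -
  let ?n = "card (UNIV :: 'n set)"
  have notone: "e (Suc i) \<noteq> SOne" if "Suc i < k" for i
  proof
    assume o: "e (Suc i) = SOne"
    have "J_le (stack_mult R) (e i) (e (Suc i))" unfolding o by (rule Jle_one)
    thus False using chn that by (simp add: J_less_def)
  qed
  have notzero: "e i \<noteq> SZero" if "Suc i < k" for i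
  proof
    assume z: "e i = SZero"
    have "J_le (stack_mult R) (e (Suc i)) (e i)" using chn that by (simp add: J_less_def)
    hence "e (Suc i) = SZero" using z Jle_zero by simp
    thus False using chn that z Jle_refl by (auto simp: J_less_def)
  qed
  have elt: "\<exists>B Y M A X. e (Suc i) = SElt B Y M A X" if "Suc (Suc i) < k" for i
    using notone[of i] notzero[of "Suc i"] that by (cases "e (Suc i)") auto
  define f where "f i = card (TT (mat (e i)))" for i
  have fb: "2 * f i \<le> ?n * (?n + 1)" for i unfolding f_def by (rule TT_bound)
  have dec: "f (Suc (Suc i)) < f (Suc i)" if dk: "Suc (Suc (Suc i)) < k" for i
  proof -
    obtain B Y M A X where e1: "e (Suc i) = SElt B Y M A X" using elt[of i] dk by auto
    obtain B2 Y2 M2 A2 X2 where e2: "e (Suc (Suc i)) = SElt B2 Y2 M2 A2 X2"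
      using elt[of "Suc i"] dk by auto
    have i1: "idem (stack_mult R) (SElt B Y M A X)" using idm e1 dk by (metis Suc_lessD)
    have i2: "idem (stack_mult R) (SElt B2 Y2 M2 A2 X2)" using idm e2 dk by (metis Suc_lessD)
    have jl: "J_less (stack_mult R) (SElt B2 Y2 M2 A2 X2) (SElt B Y M A X)"
      using chn e1 e2 dk by (metis Suc_lessD)
    hence "J_le (stack_mult R) (SElt B2 Y2 M2 A2 X2) (SElt B Y M A X)" by (simp add: J_less_def)
    from Jle_mat[OF this] obtain P Q where PQ: "M2 = bmat_mult (bmat_mult P M) Q" by blast
    have mm1: "bmat_mult M M = M" using idem_SElt[OF i1] by simp
    have mm2: "bmat_mult M2 M2 = M2" using idem_SElt[OF i2] by simp
    from main_mono[OF mm2 mm1 PQ]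
    have le: "card (TT M2) \<le> card (TT M)"
      and eqc: "card (TT M2) = card (TT M) \<Longrightarrow> \<exists>P Q. M = bmat_mult (bmat_mult P M2) Q" by auto
    have "card (TT M2) \<noteq> card (TT M)"
    proof
      assume "card (TT M2) = card (TT M)"
      then obtain P' Q' where "M = bmat_mult (bmat_mult P' M2) Q'" using eqc by blast
      hence "J_le (stack_mult R) (SElt B Y M A X) (SElt B2 Y2 M2 A2 X2)"
        by (rule mat_Jle[OF i2 i1])
      thus False using jl by (simp add: J_less_def)
    qed
    thus ?thesis using le e1 e2 by (simp add: f_def)
  qed
  have acc: "f (Suc j) + j \<le> f 1" if "Suc j + 1 < k" for j
    using that
  proof (induction j)
    case 0 then show ?case by simp
  next
    case (Suc j)
    have "f (Suc (Suc j)) < f (Suc j)" using dec[of j] Suc.prems by simp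
    moreover have "f (Suc j) + j \<le> f 1" using Suc.IH Suc.prems by simp
    ultimately show ?case by simp
  qed
  show ?thesis
  proof (cases "k \<ge> 3")
    case True
    have "f (Suc (k - 3)) + (k - 3) \<le> f 1" using acc[of "k - 3"] True by simp
    hence "2 * (k - 3) \<le> ?n * (?n + 1)" using fb[of 1] by linarith
    thus ?thesis using True by linarith
  next
    case False thus ?thesis by simp
  qed
qed

theorem mainTheorem15:
  fixes R :: "('n::finite) set \<Rightarrow> 'n \<Rightarrow> 'n \<Rightarrow> bool"
  shows "real (regular_J_length (stack_mult R))
           \<le> (real (card (UNIV :: 'n set))^2 + real (card (UNIV :: 'n set)) + 2) / 2 + 2"
proof -
  let ?n = "card (UNIV :: 'n set)"
  let ?S = "{k. \<exists>e :: nat \<Rightarrow> 'n stack_elem.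
      (\<forall>i<k. idem (stack_mult R) (e i)) \<and> (\<forall>i. Suc i < k \<longrightarrow> J_less (stack_mult R) (e (Suc i)) (e i))}"
  have ne: "?S \<noteq> {}" by auto
  have aux: "\<And>k m::nat. 2*k \<le> m \<Longrightarrow> k \<le> m div 2" by presburger
  have bd: "k \<le> (?n * (?n + 1) + 6) div 2" if "k \<in> ?S" for k
  proof -
    from that obtain e :: "nat \<Rightarrow> 'n stack_elem" where
      "\<forall>i<k. idem (stack_mult R) (e i)" "\<forall>i. Suc i < k \<longrightarrow> J_less (stack_mult R) (e (Suc i)) (e i)"
      by blast
    from chain_bound[OF this] show ?thesis by (rule aux)
  qed
  have "regular_J_length (stack_mult R) = Sup ?S" by (simp add: regular_J_length_def)
  also have "\<dots> \<le> (?n * (?n + 1) + 6) div 2" by (rule cSup_least[OF ne bd])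
  finally have le: "regular_J_length (stack_mult R) \<le> (?n * (?n + 1) + 6) div 2" .
  have "real ((?n * (?n + 1) + 6) div 2) \<le> real (?n * (?n + 1) + 6) / 2"
    using of_nat_div_le_of_nat[of "?n * (?n + 1) + 6" 2] by simp
  also have "\<dots> = (real ?n ^ 2 + real ?n + 2) / 2 + 2"
    by (simp add: power2_eq_square algebra_simps)
  finally show ?thesis using le
    by (meson of_nat_le_iff order_trans)
qed

end
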